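(* Let $G$ be a graph, $(\Gamma,\chi)$ a geometric $\ell$-layer drawing of $G$ in general position, $S$ a vertex cover of $G$, and $v\in V(G)\setminus S$. Then there exists a point $p\in C_{\Gamma,S}(v)$ such that cloning $v$ into a new vertex $w$ placed at $p$ yields a geometric $\ell$-layer drawing (in general position) of the resulting graph if and only if $A_{\Gamma,\chi}(v)\neq\emptyset$.
   Context: A straight-line drawing maps vertices to distinct points of $\mathbb{R}^2$, edges being straight segments; a geometric $\ell$-layer drawing $(\Gamma,\chi)$ of $G$ is a straight-line drawing $\Gamma$ with an edge coloring $\chi:E(G)\to[\ell]$ such that no two same-colored edges cross. General position: no three vertices collinear and no three edges crossing at a common point. Cloning $v$ into $w$ placed at $p$ means: add a new vertex $w$ with $N(w)=N_G(v)$, set $\Gamma(w)=p$, and color each edge $wu$ ($u\in N_G(v)$) with $\chi(vu)$. For distinct vertices $v,a,b$: $H_\Gamma(v,a,b)$ is the open half-plane bounded by the line through $\Gamma(a),\Gamma(b)$ not containing $\Gamma(v)$; $T_\Gamma(v,a,b)$ is the interior of the "tie" (double wedge) with center $\Gamma(v)$ and directions $\Gamma(a)-\Gamma(v)$ and $\Gamma(b)-\Gamma(v)$, i.e. the set $\{\Gamma(v)+\lambda(\alpha(\Gamma(a)-\Gamma(v))+\beta(\Gamma(b)-\Gamma(v))): \alpha,\beta>0,\lambda\neq 0\}$. The cell of $v$ is $C_{\Gamma,S}(v)=\mathbb{R}^2\setminus\bigcup_{a,b\in S,a\neq b}H_\Gamma(v,a,b)$. The admissible region is $A_{\Gamma,\chi}(v)=\bigcap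 T_\Gamma(v,a,b)$, the intersection over all distinct $a,b\in N_G(v)$ with $\chi(va)=\chi(vb)$ (the empty intersection being $\mathbb{R}^2$). *)

theory Defs
  imports "HOL-Analysis.Analysis"
begin

definition simple_graph :: "'a set \<Rightarrow> 'a set set \<Rightarrow> bool" where
  "simple_graph V E \<longleftrightarrow> finite V \<and>
     (\<forall>e\<in>E. \<exists>u x. e = {u, x} \<and> u \<noteq> x \<and> u \<in> V \<and> x \<in> V)"

definition nbhd :: "'a set set \<Rightarrow> 'a \<Rightarrow> 'a set" where
  "nbhd E v = {u. {v, u} \<in> E}"

definition vertex_cover :: "'a set \<Rightarrow> 'a set set \<Rightarrow> 'a set \<Rightarrow> bool" where
  "vertex_cover V E S \<longleftrightarrow> S \<subseteq> V \<and> (\<forall>e\<in>E. e \<inter> S \<noteq> {})"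

definition edge_int :: "('a \<Rightarrow> real^2) \<Rightarrow> 'a set \<Rightarrow> (real^2) set" where
  "edge_int \<Gamma> e = \<Union> {open_segment (\<Gamma> u) (\<Gamma> x) | u x. e = {u, x}}"

definition crosses :: "('a \<Rightarrow> real^2) \<Rightarrow> 'a set \<Rightarrow> 'a set \<Rightarrow> bool" where
  "crosses \<Gamma> e f \<longleftrightarrow> e \<noteq> f \<and> edge_int \<Gamma> e \<inter> edge_int \<Gamma> f \<noteq> {}"

definition layer_drawing ::
  "'a set \<Rightarrow> 'a set set \<Rightarrow> nat \<Rightarrow> ('a \<Rightarrow> real^2) \<Rightarrow> ('a set \<Rightarrow> nat) \<Rightarrow> bool" where
  "layer_drawing V E l \<Gamma> col \<longleftrightarrow> inj_on \<Gamma> V \<and> (\<forall>e\<in>E. col e \<in> {1..l}) \<and>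
     (\<forall>e\<in>E. \<forall>f\<in>E. col e = col f \<longrightarrow> \<not> crosses \<Gamma> e f)"

definition general_position :: "'a set \<Rightarrow> 'a set set \<Rightarrow> ('a \<Rightarrow> real^2) \<Rightarrow> bool" where
  "general_position V E \<Gamma> \<longleftrightarrow>
     (\<forall>a\<in>V. \<forall>b\<in>V. \<forall>c\<in>V. distinct [a, b, c] \<longrightarrow> \<not> collinear {\<Gamma> a, \<Gamma> b, \<Gamma> c}) \<and>
     \<not> (\<exists>x. \<exists>e1\<in>E. \<exists>e2\<in>E. \<exists>e3\<in>E. e1 \<noteq> e2 \<and> e1 \<noteq> e3 \<and> e2 \<noteq> e3 \<and>
          x \<in> edge_int \<Gamma> e1 \<and> x \<in> edge_int \<Gamma> e2 \<and> x \<in> edge_int \<Gamma> e3)"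

definition clone_edges :: "'a set set \<Rightarrow> 'a \<Rightarrow> 'a \<Rightarrow> 'a set set" where
  "clone_edges E v w = E \<union> {{w, u} | u. u \<in> nbhd E v}"

definition clone_coloring :: "('a set \<Rightarrow> nat) \<Rightarrow> 'a \<Rightarrow> 'a \<Rightarrow> 'a set \<Rightarrow> nat" where
  "clone_coloring col v w = (\<lambda>e. if w \<in> e then col (insert v (e - {w})) else col e)"

definition cross2 :: "real^2 \<Rightarrow> real^2 \<Rightarrow> real" where
  "cross2 p q = p$1 * q$2 - p$2 * q$1"

(* open half-plane bounded by the line through Gamma a, Gamma b, on the side not containing Gamma v *)
definition halfplane :: "('a \<Rightarrow> real^2) \<Rightarrow> 'a \<Rightarrow> 'a \<Rightarrow> 'a \<Rightarrow> (real^2) set" where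
  "halfplane \<Gamma> v a b =
     {x. cross2 (\<Gamma> b - \<Gamma> a) (x - \<Gamma> a) * cross2 (\<Gamma> b - \<Gamma> a) (\<Gamma> v - \<Gamma> a) < 0}"

(* interior of the tie (double wedge) with centre Gamma v and directions Gamma a - Gamma v, Gamma b - Gamma v *)
definition tie :: "('a \<Rightarrow> real^2) \<Rightarrow> 'a \<Rightarrow> 'a \<Rightarrow> 'a \<Rightarrow> (real^2) set" where
  "tie \<Gamma> v a b = {\<Gamma> v + t *\<^sub>R (\<alpha> *\<^sub>R (\<Gamma> a - \<Gamma> v) + \<beta> *\<^sub>R (\<Gamma> b - \<Gamma> v)) |
                     \<alpha> \<beta> t. \<alpha> > 0 \<and> \<beta> > 0 \<and> t \<noteq> 0}"

definition cell :: "('a \<Rightarrow> real^2) \<Rightarrow> 'a set \<Rightarrow> 'a \<Rightarrow> (real^2) set" where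
  "cell \<Gamma> S v = UNIV - \<Union> {halfplane \<Gamma> v a b | a b. a \<in> S \<and> b \<in> S \<and> a \<noteq> b}"

(* empty intersection is UNIV, as in the paper *)
definition admissible :: "'a set set \<Rightarrow> ('a \<Rightarrow> real^2) \<Rightarrow> ('a set \<Rightarrow> nat) \<Rightarrow> 'a \<Rightarrow> (real^2) set" where
  "admissible E \<Gamma> col v = \<Inter> {tie \<Gamma> v a b | a b. a \<in> nbhd E v \<and> b \<in> nbhd E v \<and> a \<noteq> b \<and>
                                   col {v, a} = col {v, b}}"

end

theory Submission
  imports Defs "HOL-Analysis.Analysis"
begin


lemma cross2_add_left[simp]: "cross2 (x + y) z = cross2 x z + cross2 y z"
  by (simp add: cross2_def algebra_simps)
lemma cross2_add_right[simp]: "cross2 z (x + y) = cross2 z x + cross2 z y"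
  by (simp add: cross2_def algebra_simps)
lemma cross2_diff_left[simp]: "cross2 (x - y) z = cross2 x z - cross2 y z"
  by (simp add: cross2_def algebra_simps)
lemma cross2_diff_right[simp]: "cross2 z (x - y) = cross2 z x - cross2 z y"
  by (simp add: cross2_def algebra_simps)
lemma cross2_scaleR_left[simp]: "cross2 (c *\<^sub>R x) z = c * cross2 x z"
  by (simp add: cross2_def algebra_simps)
lemma cross2_scaleR_right[simp]: "cross2 z (c *\<^sub>R x) = c * cross2 z x"
  by (simp add: cross2_def algebra_simps)
lemma cross2_minus_left[simp]: "cross2 (- x) z = - cross2 x z"
  by (simp add: cross2_def algebra_simps)
lemma cross2_minus_right[simp]: "cross2 z (- x) = - cross2 z x"
  by (simp add: cross2_def algebra_simps)
lemma cross2_self[simp]: "cross2 x x = 0"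
  by (simp add: cross2_def algebra_simps)
lemma cross2_zero[simp]: "cross2 0 x = 0" "cross2 x 0 = 0"
  by (simp_all add: cross2_def)
lemma cross2_swap: "cross2 y x = - cross2 x y"
  by (simp add: cross2_def algebra_simps)

lemma cramer2:
  assumes "cross2 A B \<noteq> 0"
  shows "P = (cross2 P B / cross2 A B) *\<^sub>R A + (cross2 A P / cross2 A B) *\<^sub>R B"
proof -
  have "cross2 A B *\<^sub>R P = cross2 P B *\<^sub>R A + cross2 A P *\<^sub>R B"
  proof -
    have "(cross2 A B *\<^sub>R P)$i = (cross2 P B *\<^sub>R A + cross2 A P *\<^sub>R B)$i" for i
    proof -
      have "i = 1 \<or> i = 2" by (rule exhaust_2)
      then show ?thesis unfolding cross2_def by (auto simp: algebra_simps)
    qed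
    then show ?thesis by (simp add: vec_eq_iff)
  qed
  moreover have "P = (1 / cross2 A B) *\<^sub>R (cross2 A B *\<^sub>R P)"
    using assms by simp
  ultimately have "P = (1 / cross2 A B) *\<^sub>R (cross2 P B *\<^sub>R A + cross2 A P *\<^sub>R B)"
    by simp
  then show ?thesis by (simp add: scaleR_add_right)
qed

lemma par_lemma1:
  fixes B C :: "real^2"
  assumes "cross2 B C = 0" "B$1 \<noteq> 0"
  shows "C = (C$1 / B$1) *\<^sub>R B"
proof -
  have "C$2 = (C$1 / B$1) * B$2" using assms by (simp add: cross2_def field_simps)
  then show ?thesis using assms by (simp add: vec_eq_iff forall_2)
qed

lemma par_lemma2:
  fixes B C :: "real^2"
  assumes "cross2 B C = 0" "B$2 \<noteq> 0"
  shows "C = (C$2 / B$2) *\<^sub>R B"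
proof -
  have "C$1 = (C$2 / B$2) * B$1" using assms by (simp add: cross2_def field_simps)
  then show ?thesis using assms by (simp add: vec_eq_iff forall_2)
qed

lemma collinear_cross2:
  fixes a b c :: "real^2"
  shows "collinear {a, b, c} \<longleftrightarrow> cross2 (b - a) (c - a) = 0"
proof
  assume "collinear {a, b, c}"
  then obtain u where u: "\<forall>x\<in>{a,b,c}. \<forall>y\<in>{a,b,c}. \<exists>k. x - y = k *\<^sub>R u"
    unfolding collinear_def by blast
  then obtain k1 k2 where "b - a = k1 *\<^sub>R u" "c - a = k2 *\<^sub>R u" by blast
  then show "cross2 (b - a) (c - a) = 0" by simp
next
  assume h: "cross2 (b - a) (c - a) = 0"
  show "collinear {a, b, c}"
  proof (cases "b = a")
    case True then show ?thesis by simp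
  next
    case False
    have "(b - a)$1 \<noteq> 0 \<or> (b - a)$2 \<noteq> 0"
    proof (rule ccontr)
      assume "\<not> ((b - a)$1 \<noteq> 0 \<or> (b - a)$2 \<noteq> 0)"
      then have "b - a = 0" by (simp add: vec_eq_iff forall_2)
      then show False using False by simp
    qed
    then obtain k where k: "c - a = k *\<^sub>R (b - a)"
      using par_lemma1[OF h] par_lemma2[OF h] by blast
    show ?thesis unfolding collinear_def
      apply (rule exI[of _ "b - a"])
    proof (intro ballI)
      fix x y assume "x \<in> {a,b,c}" "y \<in> {a,b,c}"
      have all: "\<forall>z\<in>{a,b,c}. \<exists>kz. z - a = kz *\<^sub>R (b - a)"
      proof -
        have "a - a = 0 *\<^sub>R (b - a)" by simp
        moreover have "b - a = 1 *\<^sub>R (b - a)" by simp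
        ultimately show ?thesis using k by blast
      qed
      then have "\<exists>kx. x - a = kx *\<^sub>R (b - a)" "\<exists>ky. y - a = ky *\<^sub>R (b - a)"
        using \<open>x \<in> {a,b,c}\<close> \<open>y \<in> {a,b,c}\<close> by blast+
      then obtain kx ky where "x - a = kx *\<^sub>R (b - a)" "y - a = ky *\<^sub>R (b - a)" by blast
      then have "x - y = (kx - ky) *\<^sub>R (b - a)"
      proof -
        have "x - y = (x - a) - (y - a)" by simp
        then show ?thesis using \<open>x - a = kx *\<^sub>R (b - a)\<close> \<open>y - a = ky *\<^sub>R (b - a)\<close>
          by (simp add: scaleR_left_diff_distrib)
      qed
      then show "\<exists>c. x - y = c *\<^sub>R (b - a)" by blast
    qed
  qed
qed

lemma tie_iff:
  assumes D: "cross2 (\<Gamma> a - \<Gamma> v) (\<Gamma> b - \<Gamma> v) \<noteq> 0"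
  shows "p \<in> tie \<Gamma> v a b \<longleftrightarrow>
    cross2 (p - \<Gamma> v) (\<Gamma> b - \<Gamma> v) * cross2 (\<Gamma> a - \<Gamma> v) (p - \<Gamma> v) > 0"
proof -
  define A where "A = \<Gamma> a - \<Gamma> v"
  define B where "B = \<Gamma> b - \<Gamma> v"
  define P where "P = p - \<Gamma> v"
  have D': "cross2 A B \<noteq> 0" using D by (simp add: A_def B_def)
  have "p \<in> tie \<Gamma> v a b \<longleftrightarrow> (\<exists>\<alpha> \<beta> t. \<alpha> > 0 \<and> \<beta> > 0 \<and> t \<noteq> 0 \<and> P = t *\<^sub>R (\<alpha> *\<^sub>R A + \<beta> *\<^sub>R B))"
    unfolding tie_def A_def B_def P_def by (auto simp: algebra_simps)
  also have "\<dots> \<longleftrightarrow> cross2 P B * cross2 A P > 0"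
  proof
    assume "\<exists>\<alpha> \<beta> t. \<alpha> > 0 \<and> \<beta> > 0 \<and> t \<noteq> 0 \<and> P = t *\<^sub>R (\<alpha> *\<^sub>R A + \<beta> *\<^sub>R B)"
    then obtain \<alpha> \<beta> t where h: "\<alpha> > 0" "\<beta> > 0" "t \<noteq> 0" "P = t *\<^sub>R (\<alpha> *\<^sub>R A + \<beta> *\<^sub>R B)"
      by blast
    have "cross2 P B = t * \<alpha> * cross2 A B" using h(4) by simp
    moreover have "cross2 A P = t * \<beta> * cross2 A B" using h(4) by simp
    ultimately have "cross2 P B * cross2 A P = (t * t) * (\<alpha> * \<beta>) * (cross2 A B * cross2 A B)"
      by simp
    moreover have "(t * t) * (\<alpha> * \<beta>) * (cross2 A B * cross2 A B) > 0"
    proof -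
      have "t * t > 0" using h(3) by (metis linorder_neqE_linordered_idom mult_neg_neg mult_pos_pos)
      moreover have "cross2 A B * cross2 A B > 0" using D' by (metis linorder_neqE_linordered_idom mult_neg_neg mult_pos_pos)
      moreover have "\<alpha> * \<beta> > 0" using h by simp
      ultimately show ?thesis by simp
    qed
    ultimately show "cross2 P B * cross2 A P > 0" by simp
  next
    assume pos: "cross2 P B * cross2 A P > 0"
    define \<alpha> where "\<alpha> = cross2 P B / cross2 A B"
    define \<beta> where "\<beta> = cross2 A P / cross2 A B"
    have P: "P = \<alpha> *\<^sub>R A + \<beta> *\<^sub>R B" unfolding \<alpha>_def \<beta>_def by (rule cramer2[OF D'])
    have "\<alpha> * \<beta> = (cross2 P B * cross2 A P) / (cross2 A B * cross2 A B)"
      unfolding \<alpha>_def \<beta>_def by simp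
    also have "\<dots> > 0" using pos D' by (metis divide_pos_pos linorder_neqE_linordered_idom mult_neg_neg mult_pos_pos)
    finally have ab: "\<alpha> * \<beta> > 0" .
    show "\<exists>\<alpha> \<beta> t. \<alpha> > 0 \<and> \<beta> > 0 \<and> t \<noteq> 0 \<and> P = t *\<^sub>R (\<alpha> *\<^sub>R A + \<beta> *\<^sub>R B)"
    proof (cases "\<alpha> > 0")
      case True
      then have "\<beta> > 0" using ab by (simp add: zero_less_mult_iff)
      then show ?thesis using True P by (intro exI[of _ \<alpha>] exI[of _ \<beta>] exI[of _ 1]) auto
    next
      case False
      then have "\<alpha> < 0" "\<beta> < 0" using ab by (auto simp: zero_less_mult_iff)
      moreover have "P = (-1) *\<^sub>R ((- \<alpha>) *\<^sub>R A + (- \<beta>) *\<^sub>R B)" using P by simp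
      ultimately show ?thesis by (intro exI[of _ "-\<alpha>"] exI[of _ "-\<beta>"] exI[of _ "-1"]) auto
    qed
  qed
  finally show ?thesis by (simp add: A_def B_def P_def)
qed

lemma tie_nocross:
  fixes v0 u y p :: "real^2"
  assumes D: "cross2 (u - v0) (y - v0) \<noteq> 0"
    and pos: "cross2 (p - v0) (y - v0) * cross2 (u - v0) (p - v0) > 0"
  shows "open_segment p u \<inter> open_segment v0 y = {}"
proof (rule ccontr)
  assume "open_segment p u \<inter> open_segment v0 y \<noteq> {}"
  then obtain z where "z \<in> open_segment p u" "z \<in> open_segment v0 y" by blast
  then obtain l m where l: "0 < l" "l < 1" "z = (1 - l) *\<^sub>R p + l *\<^sub>R u"
    and m: "0 < m" "m < 1" "z = (1 - m) *\<^sub>R v0 + m *\<^sub>R y"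
    unfolding in_segment by blast
  define P where "P = p - v0"
  define U where "U = u - v0"
  define Y where "Y = y - v0"
  have eq: "(1 - l) *\<^sub>R P + l *\<^sub>R U = m *\<^sub>R Y"
    using l(3) m(3) unfolding P_def U_def Y_def by (simp add: algebra_simps)
  have e1: "(1 - l) * cross2 P Y = - (l * cross2 U Y)"
  proof -
    have "cross2 ((1 - l) *\<^sub>R P + l *\<^sub>R U) Y = cross2 (m *\<^sub>R Y) Y" using eq by simp
    then have "(1 - l) * cross2 P Y + l * cross2 U Y = 0" by simp
    then show ?thesis by linarith
  qed
  have e2: "(1 - l) * cross2 U P = m * cross2 U Y"
  proof -
    have "cross2 U ((1 - l) *\<^sub>R P + l *\<^sub>R U) = cross2 U (m *\<^sub>R Y)" using eq by simp
    then show ?thesis by simp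
  qed
  have "((1 - l) * cross2 P Y) * ((1 - l) * cross2 U P) = (- (l * cross2 U Y)) * (m * cross2 U Y)"
    by (simp only: e1 e2)
  then have "((1 - l) * (1 - l)) * (cross2 P Y * cross2 U P) = - (l * m) * (cross2 U Y * cross2 U Y)"
    by (simp add: algebra_simps)
  moreover have "((1 - l) * (1 - l)) * (cross2 P Y * cross2 U P) > 0"
    using pos l by (simp add: P_def U_def Y_def)
  moreover have "- (l * m) * (cross2 U Y * cross2 U Y) < 0"
  proof -
    have "cross2 U Y * cross2 U Y > 0" using D unfolding U_def Y_def by (metis linorder_neqE_linordered_idom mult_neg_neg mult_pos_pos)
    moreover have "l * m > 0" using l m by simp
    ultimately show ?thesis by (simp add: mult_pos_pos)
  qed
  ultimately show False by linarith
qed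

lemma cross_exists:
  fixes v0 a b p :: "real^2"
  defines "A \<equiv> a - v0" and "B \<equiv> b - v0" and "P \<equiv> p - v0"
  assumes D: "cross2 A B \<noteq> 0"
    and f: "cross2 P B * cross2 A B > 0" and g: "cross2 A P * cross2 A B < 0"
    and h: "(cross2 A B - cross2 P B - cross2 A P) * cross2 A B > 0"
  shows "open_segment p b \<inter> open_segment v0 a \<noteq> {}"
proof -
  define \<alpha> where "\<alpha> = cross2 P B / cross2 A B"
  define \<beta> where "\<beta> = cross2 A P / cross2 A B"
  have P: "P = \<alpha> *\<^sub>R A + \<beta> *\<^sub>R B" unfolding \<alpha>_def \<beta>_def by (rule cramer2[OF D])
  have DD: "cross2 A B * cross2 A B > 0" using D by (metis linorder_neqE_linordered_idom mult_neg_neg mult_pos_pos)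
  have al: "\<alpha> > 0"
  proof -
    have "\<alpha> = (cross2 P B * cross2 A B) / (cross2 A B * cross2 A B)"
      unfolding \<alpha>_def using D by simp
    then show ?thesis using f DD by (metis divide_pos_pos)
  qed
  have be: "\<beta> < 0"
  proof -
    have "\<beta> = (cross2 A P * cross2 A B) / (cross2 A B * cross2 A B)"
      unfolding \<beta>_def using D by simp
    then show ?thesis using g DD by (metis divide_neg_pos)
  qed
  have s: "1 - \<alpha> - \<beta> > 0"
  proof -
    have "1 - \<alpha> - \<beta> = ((cross2 A B - cross2 P B - cross2 A P) * cross2 A B) / (cross2 A B * cross2 A B)"
      unfolding \<alpha>_def \<beta>_def using D by (simp add: field_simps)
    then show ?thesis using h DD by (metis divide_pos_pos)
  qed
  define u where "u = \<alpha> / (1 - \<beta>)"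
  define lam where "lam = - \<beta> / (1 - \<beta>)"
  have nb: "1 - \<beta> > 0" using be by simp
  have u01: "0 < u" "u < 1" unfolding u_def using al nb s by (simp_all add: field_simps)
  have l01: "0 < lam" "lam < 1" unfolding lam_def using be nb by (simp_all add: field_simps)
  define z where "z = v0 + u *\<^sub>R A"
  have av: "a \<noteq> v0" using D A_def by auto
  have pb: "p \<noteq> b"
  proof
    assume "p = b"
    then have "cross2 A P * cross2 A B > 0" using DD by (simp add: P_def B_def)
    then show False using g by simp
  qed
  have z1: "z \<in> open_segment v0 a"
    unfolding in_segment using av u01
    by (intro conjI exI[of _ u]) (auto simp: z_def A_def algebra_simps)
  have lam1: "1 - lam = 1 / (1 - \<beta>)" unfolding lam_def using nb by (simp add: field_simps)
  have "(1 - lam) *\<^sub>R p + lam *\<^sub>R b = v0 + ((1 - lam) * \<alpha>) *\<^sub>R A + ((1 - lam) * \<beta> + lam) *\<^sub>R B"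
  proof -
    have "p = v0 + P" "b = v0 + B" by (simp_all add: P_def B_def)
    then show ?thesis using P by (simp add: algebra_simps)
  qed
  also have "(1 - lam) * \<beta> + lam = 0" unfolding lam1 unfolding lam_def using nb by (simp add: field_simps)
  also have "(1 - lam) * \<alpha> = u" unfolding lam1 u_def by simp
  finally have "(1 - lam) *\<^sub>R p + lam *\<^sub>R b = z" by (simp add: z_def)
  then have z2: "z \<in> open_segment p b"
    unfolding in_segment using pb l01 by blast
  show ?thesis using z1 z2 by blast
qed



lemma edge_int_pair: "edge_int \<Gamma> {a, b} = open_segment (\<Gamma> a) (\<Gamma> b)"
proof -
  have "{open_segment (\<Gamma> u) (\<Gamma> x) | u x. {a, b} = {u, x}} =
        {open_segment (\<Gamma> a) (\<Gamma> b), open_segment (\<Gamma> b) (\<Gamma> a)}"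
    by (auto simp: doubleton_eq_iff)
  then show ?thesis unfolding edge_int_def by (simp add: open_segment_commute)
qed

lemma edge_int_upd:
  assumes "w \<notin> e"
  shows "edge_int (\<Gamma>(w := p)) e = edge_int \<Gamma> e"
proof -
  have "{open_segment ((\<Gamma>(w := p)) u) ((\<Gamma>(w := p)) x) | u x. e = {u, x}} =
        {open_segment (\<Gamma> u) (\<Gamma> x) | u x. e = {u, x}}"
    using assms by fastforce
  then show ?thesis unfolding edge_int_def by simp
qed

lemma open_seg_collinear:
  assumes "z \<in> open_segment a b"
  shows "collinear {a, b, z}"
proof -
  have "{a, b, z} \<subseteq> closed_segment a b" using assms open_closed_segment by auto
  then show ?thesis using collinear_closed_segment collinear_subset by blast
qed

lemma shared_endpoint:
  assumes "z \<in> open_segment a b" "z \<in> open_segment a c"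
  shows "collinear {a, b, c}"
proof -
  have za: "z \<noteq> a" using assms(1) by (auto simp: open_segment_def)
  have "collinear {a, b, z}" "collinear {a, c, z}" using assms open_seg_collinear by blast+
  then have "collinear {b, a, z}" "collinear {a, z, c}" by (simp_all add: insert_commute)
  then have "collinear {b, a, c}" using collinear_3_trans za by blast
  then show ?thesis by (simp add: insert_commute)
qed

lemma seg_inter_one:
  assumes "z1 \<in> open_segment a b" "z1 \<in> open_segment c d"
    and "z2 \<in> open_segment a b" "z2 \<in> open_segment c d" and "z1 \<noteq> z2"
  shows "collinear {a, b, c, d}"
proof -
  have "{z1, z2, a, b} \<subseteq> closed_segment a b" using assms open_closed_segment by auto
  then have c1: "collinear {z1, z2, a, b}" using collinear_closed_segment collinear_subset by blast
  have "{z1, z2, c, d} \<subseteq> closed_segment c d" using assms open_closed_segment by auto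
  then have c2: "collinear {z1, z2, c, d}" using collinear_closed_segment collinear_subset by blast
  have "collinear {z1, z2, a}" "collinear {z1, z2, b}" "collinear {z1, z2, c}" "collinear {z1, z2, d}"
    using c1 c2 collinear_4_3[OF assms(5)] by blast+
  then have "collinear (insert z1 (insert z2 {a, b, c, d}))"
    using collinear_triples[OF assms(5)] by blast
  then show ?thesis by (rule collinear_subset) auto
qed

lemma line_negligible:
  fixes a b :: "real^2"
  assumes "a \<noteq> b"
  shows "negligible {p. collinear {a, b, p}}"
proof -
  define d where "d = b - a"
  define n :: "real^2" where "n = (\<chi> i. if i = 1 then - d$2 else d$1)"
  have n1: "n$1 = - d$2" and n2: "n$2 = d$1" by (simp_all add: n_def)
  have "d \<noteq> 0" using assms d_def by simp
  have "n \<noteq> 0"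
  proof
    assume "n = 0"
    then have "d$1 = 0" "d$2 = 0" using n1 n2 by simp_all
    then have "d = 0" by (simp add: vec_eq_iff forall_2)
    then show False using \<open>d \<noteq> 0\<close> by simp
  qed
  have "{p. collinear {a, b, p}} = {p. n \<bullet> p = n \<bullet> a}"
  proof -
    have "collinear {a, b, p} \<longleftrightarrow> n \<bullet> p = n \<bullet> a" for p
      unfolding collinear_cross2 inner_vec_def sum_2 n1 n2 d_def[symmetric] cross2_def
      by (simp add: algebra_simps)
    then show ?thesis by blast
  qed
  moreover have "negligible {p. n \<bullet> p = n \<bullet> a}"
    using negligible_hyperplane[of n "n \<bullet> a"] \<open>n \<noteq> 0\<close> by blast
  ultimately show ?thesis by simp
qed

lemma seg_near:
  fixes v0 u x y :: "real^2"
  assumes "closed_segment v0 u \<inter> closed_segment x y = {}"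
  shows "eventually (\<lambda>p. closed_segment p u \<inter> closed_segment x y = {}) (nhds v0)"
proof -
  obtain d where d: "d > 0" "\<forall>s\<in>closed_segment v0 u. \<forall>t\<in>closed_segment x y. d \<le> dist s t"
    using separate_compact_closed[OF compact_segment closed_segment assms] by blast
  have "closed_segment p u \<inter> closed_segment x y = {}" if "dist p v0 < d" for p
  proof (rule ccontr)
    assume "closed_segment p u \<inter> closed_segment x y \<noteq> {}"
    then obtain z where z: "z \<in> closed_segment p u" "z \<in> closed_segment x y" by blast
    then obtain t where t: "0 \<le> t" "t \<le> 1" "z = (1 - t) *\<^sub>R p + t *\<^sub>R u"
      unfolding in_segment by blast
    define z' where "z' = (1 - t) *\<^sub>R v0 + t *\<^sub>R u"
    have z': "z' \<in> closed_segment v0 u" unfolding in_segment z'_def using t by blast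
    have "z' - z = (1 - t) *\<^sub>R (v0 - p)" using t(3) by (simp add: z'_def algebra_simps)
    then have "dist z' z = (1 - t) * dist v0 p" using t by (simp add: dist_norm)
    also have "\<dots> \<le> dist v0 p" using t by (simp add: mult_left_le_one_le)
    also have "\<dots> < d" using that by (simp add: dist_commute)
    finally show False using d(2) z' z(2) by force
  qed
  then show ?thesis unfolding eventually_nhds_metric by (intro exI[of _ d]) (auto simp: d)
qed

lemma hp_ident:
  fixes a b p v :: "real^2"
  shows "cross2 (b - a) (p - a) = cross2 (a - v) (b - v) - cross2 (p - v) (b - v) - cross2 (a - v) (p - v)"
    and "cross2 (b - a) (v - a) = cross2 (a - v) (b - v)"
  by (simp_all add: cross2_def algebra_simps)

lemma cross_exists2:
  fixes v0 a b p :: "real^2"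
  defines "A \<equiv> a - v0" and "B \<equiv> b - v0" and "P \<equiv> p - v0"
  assumes D: "cross2 A B \<noteq> 0"
    and f: "cross2 P B * cross2 A B < 0" and g: "cross2 A P * cross2 A B > 0"
    and h: "(cross2 A B - cross2 P B - cross2 A P) * cross2 A B > 0"
  shows "open_segment p a \<inter> open_segment v0 b \<noteq> {}"
proof -
  have s1: "cross2 B A = - cross2 A B" "cross2 P A = - cross2 A P" "cross2 B P = - cross2 P B"
    by (simp_all add: cross2_swap[symmetric])
  show ?thesis
    apply (rule cross_exists[of b v0 a p])
    using D f g h unfolding A_def[symmetric] B_def[symmetric] P_def[symmetric] s1
    by (simp_all add: algebra_simps)
qed

lemma tendsto_cross2[tendsto_intros]:
  "(f \<longlongrightarrow> a) F \<Longrightarrow> (g \<longlongrightarrow> b) F \<Longrightarrow> ((\<lambda>x. cross2 (f x) (g x)) \<longlongrightarrow> cross2 a b) F"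
  unfolding cross2_def by (intro tendsto_intros)



locale CC =
  fixes V :: "'a set" and E :: "'a set set" and l :: nat
    and \<Gamma> :: "'a \<Rightarrow> real^2" and col :: "'a set \<Rightarrow> nat" and S :: "'a set" and v w :: 'a
  assumes sg: "simple_graph V E"
    and ld: "layer_drawing V E l \<Gamma> col"
    and gp: "general_position V E \<Gamma>"
    and vc: "vertex_cover V E S"
    and vV: "v \<in> V" and vS: "v \<notin> S"
    and wV: "w \<notin> V"
begin

abbreviation "N \<equiv> nbhd E v"

lemma finV: "finite V" using sg by (simp add: simple_graph_def)

lemma edgeE: "e \<in> E \<Longrightarrow> \<exists>x y. e = {x, y} \<and> x \<noteq> y \<and> x \<in> V \<and> y \<in> V"
  using sg by (auto simp: simple_graph_def)

lemma finE: "finite E"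
proof -
  have "E \<subseteq> Pow V" using edgeE by blast
  then show ?thesis using finV by (simp add: finite_subset)
qed

lemma w_notin: "e \<in> E \<Longrightarrow> w \<notin> e"
  using edgeE wV by blast

lemma N_props: assumes "u \<in> N" shows "u \<in> S" "u \<in> V" "u \<noteq> v" "{v, u} \<in> E" "u \<noteq> w"
proof -
  show e: "{v, u} \<in> E" using assms by (simp add: nbhd_def)
  then obtain x y where xy: "{v, u} = {x, y}" "x \<noteq> y" "x \<in> V" "y \<in> V" using edgeE by blast
  then show "u \<in> V" "u \<noteq> v" by (auto simp: doubleton_eq_iff)
  then show "u \<noteq> w" using wV by blast
  have "{v, u} \<inter> S \<noteq> {}" using vc e unfolding vertex_cover_def by blast
  then show "u \<in> S" using vS by auto
qed

lemma finN: "finite N"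
proof (rule finite_subset[OF _ finV])
  show "N \<subseteq> V" using N_props(2) by blast
qed

lemma ncol: "a \<in> V \<Longrightarrow> b \<in> V \<Longrightarrow> c \<in> V \<Longrightarrow> a \<noteq> b \<Longrightarrow> a \<noteq> c \<Longrightarrow> b \<noteq> c \<Longrightarrow>
   \<not> collinear {\<Gamma> a, \<Gamma> b, \<Gamma> c}"
  using gp by (simp add: general_position_def)

lemma injG: "a \<in> V \<Longrightarrow> b \<in> V \<Longrightarrow> a \<noteq> b \<Longrightarrow> \<Gamma> a \<noteq> \<Gamma> b"
  using ld by (auto simp: layer_drawing_def inj_on_def)

lemma nocross: "e \<in> E \<Longrightarrow> f \<in> E \<Longrightarrow> col e = col f \<Longrightarrow> e \<noteq> f \<Longrightarrow> edge_int \<Gamma> e \<inter> edge_int \<Gamma> f = {}"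
  using ld by (auto simp: layer_drawing_def crosses_def)

lemma colE: "e \<in> E \<Longrightarrow> col e \<in> {1..l}"
  using ld by (auto simp: layer_drawing_def)

lemma no3: "e1 \<in> E \<Longrightarrow> e2 \<in> E \<Longrightarrow> e3 \<in> E \<Longrightarrow> e1 \<noteq> e2 \<Longrightarrow> e1 \<noteq> e3 \<Longrightarrow> e2 \<noteq> e3 \<Longrightarrow>
  x \<in> edge_int \<Gamma> e1 \<Longrightarrow> x \<in> edge_int \<Gamma> e2 \<Longrightarrow> x \<in> edge_int \<Gamma> e3 \<Longrightarrow> False"
  using gp unfolding general_position_def by blast

lemma E'_iff: "e \<in> clone_edges E v w \<longleftrightarrow> e \<in> E \<or> (\<exists>u\<in>N. e = {w, u})"
  by (auto simp: clone_edges_def)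

lemma col'_new: "u \<noteq> w \<Longrightarrow> clone_coloring col v w {w, u} = col {v, u}"
proof -
  assume "u \<noteq> w"
  then have "insert v ({w, u} - {w}) = {v, u}" by auto
  then show ?thesis by (simp add: clone_coloring_def)
qed

lemma col'_old: "w \<notin> e \<Longrightarrow> clone_coloring col v w e = col e"
  by (simp add: clone_coloring_def)

lemma eint_new: "u \<noteq> w \<Longrightarrow> edge_int (\<Gamma>(w := p)) {w, u} = open_segment p (\<Gamma> u)"
  by (simp add: edge_int_pair)

lemma eint_old: "e \<in> E \<Longrightarrow> edge_int (\<Gamma>(w := p)) e = edge_int \<Gamma> e"
  using w_notin edge_int_upd by metis

lemma inter_one:
  assumes "e2 \<in> E" "e3 \<in> E" "e2 \<noteq> e3"
  shows "\<exists>z0. edge_int \<Gamma> e2 \<inter> edge_int \<Gamma> e3 \<subseteq> {z0}"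
proof (rule ccontr)
  assume nt: "\<not> ?thesis"
  obtain z1 z2 where z: "z1 \<in> edge_int \<Gamma> e2 \<inter> edge_int \<Gamma> e3" "z2 \<in> edge_int \<Gamma> e2 \<inter> edge_int \<Gamma> e3" "z1 \<noteq> z2"
  proof -
    have "edge_int \<Gamma> e2 \<inter> edge_int \<Gamma> e3 \<noteq> {}" using nt by blast
    then obtain z1 where z1: "z1 \<in> edge_int \<Gamma> e2 \<inter> edge_int \<Gamma> e3" by blast
    have "\<not> edge_int \<Gamma> e2 \<inter> edge_int \<Gamma> e3 \<subseteq> {z1}" using nt by blast
    then obtain z2 where "z2 \<in> edge_int \<Gamma> e2 \<inter> edge_int \<Gamma> e3" "z2 \<noteq> z1" by blast
    then show ?thesis using that z1 by blast
  qed
  obtain a b where ab: "e2 = {a, b}" "a \<noteq> b" "a \<in> V" "b \<in> V" using edgeE[OF assms(1)] by blast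
  obtain c d where cd: "e3 = {c, d}" "c \<noteq> d" "c \<in> V" "d \<in> V" using edgeE[OF assms(2)] by blast
  have col4: "collinear {\<Gamma> a, \<Gamma> b, \<Gamma> c, \<Gamma> d}"
  proof -
    have "z1 \<in> open_segment (\<Gamma> a) (\<Gamma> b)" "z1 \<in> open_segment (\<Gamma> c) (\<Gamma> d)"
       "z2 \<in> open_segment (\<Gamma> a) (\<Gamma> b)" "z2 \<in> open_segment (\<Gamma> c) (\<Gamma> d)"
      using z unfolding ab(1) cd(1) edge_int_pair by blast+
    then show ?thesis by (rule seg_inter_one[OF _ _ _ _ z(3)])
  qed
  have "c \<notin> {a, b} \<or> d \<notin> {a, b}" using ab cd assms(3) by auto
  then show False
  proof
    assume "c \<notin> {a, b}"
    then have "\<not> collinear {\<Gamma> a, \<Gamma> b, \<Gamma> c}" using ncol[of a b c] ab cd by blast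
    moreover have "{\<Gamma> a, \<Gamma> b, \<Gamma> c} \<subseteq> {\<Gamma> a, \<Gamma> b, \<Gamma> c, \<Gamma> d}" by blast
    ultimately show False using col4 collinear_subset by blast
  next
    assume "d \<notin> {a, b}"
    then have "\<not> collinear {\<Gamma> a, \<Gamma> b, \<Gamma> d}" using ncol[of a b d] ab cd by blast
    moreover have "{\<Gamma> a, \<Gamma> b, \<Gamma> d} \<subseteq> {\<Gamma> a, \<Gamma> b, \<Gamma> c, \<Gamma> d}" by blast
    ultimately show False using col4 collinear_subset by blast
  qed
qed

lemma D_nz: "a \<in> V \<Longrightarrow> b \<in> V \<Longrightarrow> a \<noteq> b \<Longrightarrow> a \<noteq> v \<Longrightarrow> b \<noteq> v \<Longrightarrow>
   cross2 (\<Gamma> a - \<Gamma> v) (\<Gamma> b - \<Gamma> v) \<noteq> 0"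
proof -
  assume "a \<in> V" "b \<in> V" "a \<noteq> b" "a \<noteq> v" "b \<noteq> v"
  then have "\<not> collinear {\<Gamma> v, \<Gamma> a, \<Gamma> b}" using ncol[of v a b] vV by metis
  then show ?thesis unfolding collinear_cross2 .
qed

end


context CC begin

lemma newold_cross:
  assumes ld': "layer_drawing (insert w V) (clone_edges E v w) l (\<Gamma>(w:=p)) (clone_coloring col v w)"
    and u: "u \<in> N" and y: "y \<in> N" and c: "col {v, u} = col {v, y}"
  shows "open_segment p (\<Gamma> u) \<inter> open_segment (\<Gamma> v) (\<Gamma> y) = {}"
proof -
  have e1: "{w, u} \<in> clone_edges E v w" using u by (auto simp: E'_iff)
  have yE: "{v, y} \<in> E" using N_props[OF y] by blast
  then have e2: "{v, y} \<in> clone_edges E v w" by (simp add: E'_iff)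
  have wy: "w \<notin> {v, y}" using w_notin[OF yE] .
  have uw: "u \<noteq> w" using N_props[OF u] by blast
  have "clone_coloring col v w {w, u} = clone_coloring col v w {v, y}"
    using col'_new[OF uw] col'_old[OF wy] c by simp
  then have "\<not> crosses (\<Gamma>(w:=p)) {w, u} {v, y}"
    using ld' e1 e2 unfolding layer_drawing_def by blast
  moreover have "{w, u} \<noteq> {v, y}" using wy by blast
  ultimately have "edge_int (\<Gamma>(w:=p)) {w, u} \<inter> edge_int (\<Gamma>(w:=p)) {v, y} = {}"
    unfolding crosses_def by blast
  moreover have "edge_int (\<Gamma>(w:=p)) {w, u} = open_segment p (\<Gamma> u)" by (rule eint_new[OF uw])
  moreover have "edge_int (\<Gamma>(w:=p)) {v, y} = open_segment (\<Gamma> v) (\<Gamma> y)"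
    using eint_old[OF yE] edge_int_pair by metis
  ultimately show ?thesis by simp
qed

lemma dir1:
  assumes pc: "p \<in> cell \<Gamma> S v"
    and ld': "layer_drawing (insert w V) (clone_edges E v w) l (\<Gamma>(w:=p)) (clone_coloring col v w)"
    and gp': "general_position (insert w V) (clone_edges E v w) (\<Gamma>(w:=p))"
  shows "p \<in> admissible E \<Gamma> col v"
  unfolding admissible_def
proof (intro InterI, elim CollectE exE conjE)
  fix T a b
  assume T: "T = tie \<Gamma> v a b" and a: "a \<in> N" and b: "b \<in> N" and ab: "a \<noteq> b"
    and c: "col {v, a} = col {v, b}"
  have ncol': "\<not> collinear {(\<Gamma>(w:=p)) x, (\<Gamma>(w:=p)) y, (\<Gamma>(w:=p)) z}"
    if "x \<in> insert w V" "y \<in> insert w V" "z \<in> insert w V" "distinct [x, y, z]" for x y z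
    using gp' that unfolding general_position_def by blast
  note Na = N_props[OF a] and Nb = N_props[OF b]
  have vw: "v \<noteq> w" using vV wV by blast
  define v0 where "v0 = \<Gamma> v"
  define D where "D = cross2 (\<Gamma> a - v0) (\<Gamma> b - v0)"
  define f where "f = cross2 (p - v0) (\<Gamma> b - v0)"
  define g where "g = cross2 (\<Gamma> a - v0) (p - v0)"
  have D: "D \<noteq> 0" unfolding D_def v0_def using D_nz Na Nb ab by blast
  have "\<not> collinear {\<Gamma> v, p, \<Gamma> b}"
    using ncol'[of v w b] vV Nb vw by simp
  then have f0: "f \<noteq> 0" unfolding f_def v0_def collinear_cross2 .
  have "\<not> collinear {\<Gamma> v, \<Gamma> a, p}"
    using ncol'[of v a w] vV Na vw by simp
  then have g0: "g \<noteq> 0" unfolding g_def v0_def collinear_cross2 .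
  have "\<not> collinear {\<Gamma> a, \<Gamma> b, p}"
    using ncol'[of a b w] Na Nb ab by simp
  then have "cross2 (\<Gamma> b - \<Gamma> a) (p - \<Gamma> a) \<noteq> 0" unfolding collinear_cross2 .
  then have h0: "D - f - g \<noteq> 0" using hp_ident(1)[of "\<Gamma> b" "\<Gamma> a" p v0] unfolding D_def f_def g_def by linarith
  have "p \<notin> halfplane \<Gamma> v a b" using pc Na Nb ab unfolding cell_def by blast
  then have hp: "\<not> cross2 (\<Gamma> b - \<Gamma> a) (p - \<Gamma> a) * cross2 (\<Gamma> b - \<Gamma> a) (v0 - \<Gamma> a) < 0"
    unfolding halfplane_def v0_def by simp
  have e1: "cross2 (\<Gamma> b - \<Gamma> a) (p - \<Gamma> a) = D - f - g"
    unfolding D_def f_def g_def by (rule hp_ident(1))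
  have e2: "cross2 (\<Gamma> b - \<Gamma> a) (v0 - \<Gamma> a) = D"
    unfolding D_def by (rule hp_ident(2))
  have "\<not> (D - f - g) * D < 0" using hp unfolding e1 e2 .
  moreover have "(D - f - g) * D \<noteq> 0" using h0 D by simp
  ultimately have h: "(D - f - g) * D > 0" by linarith
  show "p \<in> T" unfolding T tie_iff[where \<Gamma>=\<Gamma> and v=v and a=a and b=b, OF D[unfolded D_def v0_def]] v0_def[symmetric] f_def[symmetric] g_def[symmetric]
  proof (rule ccontr)
    assume "\<not> f * g > 0"
    moreover have "f * g \<noteq> 0" using f0 g0 by simp
    ultimately have fg: "f * g < 0" by linarith
    have DD: "D * D > 0" using D by (metis linorder_neqE_linordered_idom mult_neg_neg mult_pos_pos)
    have prod: "(f * D) * (g * D) = (f * g) * (D * D)" by (simp add: ac_simps)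
    have "(f * D) * (g * D) < 0" unfolding prod using fg DD by (simp add: mult_neg_pos)
    then have "(f * D > 0 \<and> g * D < 0) \<or> (f * D < 0 \<and> g * D > 0)"
      by (auto simp: mult_less_0_iff)
    then show False
    proof
      assume s: "f * D > 0 \<and> g * D < 0"
      have "open_segment p (\<Gamma> b) \<inter> open_segment v0 (\<Gamma> a) \<noteq> {}"
        apply (rule cross_exists)
        using D s h unfolding D_def f_def g_def by auto
      then show False using newold_cross[OF ld' b a c[symmetric]] v0_def by simp
    next
      assume s: "f * D < 0 \<and> g * D > 0"
      have "open_segment p (\<Gamma> a) \<inter> open_segment v0 (\<Gamma> b) \<noteq> {}"
        apply (rule cross_exists2)
        using D s h unfolding D_def f_def g_def by auto
      then show False using newold_cross[OF ld' a b c] v0_def by simp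
    qed
  qed
qed

end


context CC begin

lemma closed_vertex:
  assumes "a \<in> V" "b \<in> V" "c \<in> V" "a \<noteq> b" "\<Gamma> c \<in> closed_segment (\<Gamma> a) (\<Gamma> b)"
  shows "c = a \<or> c = b"
proof (rule ccontr)
  assume n: "\<not> (c = a \<or> c = b)"
  then have "\<Gamma> c \<noteq> \<Gamma> a" "\<Gamma> c \<noteq> \<Gamma> b" using injG assms by metis+
  then have "\<Gamma> c \<in> open_segment (\<Gamma> a) (\<Gamma> b)" using assms(5) by (simp add: open_segment_def)
  then have "collinear {\<Gamma> a, \<Gamma> b, \<Gamma> c}" by (rule open_seg_collinear)
  then show False using ncol[of a b c] assms n by blast
qed

lemma vertex_not_open:
  assumes "a \<in> V" "b \<in> V" "c \<in> V" "c \<noteq> a" "c \<noteq> b" "a \<noteq> b"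
  shows "\<Gamma> c \<notin> open_segment (\<Gamma> a) (\<Gamma> b)"
  using closed_vertex[OF assms(1-3,6)] assms(4,5) open_closed_segment by blast

lemma newedge_ok:
  assumes P3: "\<forall>a\<in>V. \<forall>b\<in>V. a \<noteq> b \<longrightarrow> \<not> collinear {\<Gamma> a, \<Gamma> b, p}"
    and P4: "p \<in> admissible E \<Gamma> col v"
    and P5: "\<forall>u\<in>N. \<forall>e\<in>E. v \<notin> e \<longrightarrow> u \<notin> e \<longrightarrow> col e = col {v, u} \<longrightarrow> open_segment p (\<Gamma> u) \<inter> edge_int \<Gamma> e = {}"
    and u: "u \<in> N" and f: "f \<in> E" and c: "col f = col {v, u}"
  shows "open_segment p (\<Gamma> u) \<inter> edge_int \<Gamma> f = {}"
proof -
  note Nu = N_props[OF u]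
  obtain x y where xy: "f = {x, y}" "x \<noteq> y" "x \<in> V" "y \<in> V" using edgeE[OF f] by blast
  have shared: False if "q \<in> V" "q \<noteq> u" "z \<in> open_segment p (\<Gamma> u)" "z \<in> open_segment (\<Gamma> u) (\<Gamma> q)" for q z
  proof -
    have "z \<in> open_segment (\<Gamma> u) p" using that(3) by (simp add: open_segment_commute)
    then have "collinear {\<Gamma> u, p, \<Gamma> q}" using shared_endpoint that(4) by blast
    then have "collinear {\<Gamma> u, \<Gamma> q, p}" by (simp add: insert_commute)
    then show False using P3 that(1,2) Nu(2) by metis
  qed
  show ?thesis
  proof (cases "v \<in> f")
    case True
    then obtain y' where fy: "f = {v, y'}" using xy by auto
    have y'N: "y' \<in> N" using f fy by (simp add: nbhd_def)
    note Ny = N_props[OF y'N]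
    show ?thesis
    proof (cases "y' = u")
      case True
      show ?thesis
      proof (rule ccontr)
        assume "open_segment p (\<Gamma> u) \<inter> edge_int \<Gamma> f \<noteq> {}"
        then obtain z where "z \<in> open_segment p (\<Gamma> u)" "z \<in> open_segment (\<Gamma> u) (\<Gamma> v)"
          unfolding fy True edge_int_pair by (auto simp: open_segment_commute)
        then show False using shared[of v z] vV Nu by blast
      qed
    next
      case False
      have D: "cross2 (\<Gamma> u - \<Gamma> v) (\<Gamma> y' - \<Gamma> v) \<noteq> 0"
        using D_nz[of u y'] Nu(2,3) Ny(2,3) False by metis
      have c': "col {v, u} = col {v, y'}" using c fy by simp
      have "tie \<Gamma> v u y' \<in> {tie \<Gamma> v a b | a b. a \<in> N \<and> b \<in> N \<and> a \<noteq> b \<and> col {v, a} = col {v, b}}"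
        using u y'N False c' by (metis (mono_tags, lifting) mem_Collect_eq)
      then have "p \<in> tie \<Gamma> v u y'"
        using P4 unfolding admissible_def by (rule InterD[rotated])
      then have "cross2 (p - \<Gamma> v) (\<Gamma> y' - \<Gamma> v) * cross2 (\<Gamma> u - \<Gamma> v) (p - \<Gamma> v) > 0"
        using tie_iff[where \<Gamma>=\<Gamma> and v=v and a=u and b=y', OF D] by blast
      then have "open_segment p (\<Gamma> u) \<inter> open_segment (\<Gamma> v) (\<Gamma> y') = {}"
        using tie_nocross D by blast
      then show ?thesis unfolding fy edge_int_pair .
    qed
  next
    case vf: False
    show ?thesis
    proof (cases "u \<in> f")
      case True
      then obtain y' where fy: "f = {u, y'}" "y' \<noteq> u" "y' \<in> V" using xy by auto
      show ?thesis
      proof (rule ccontr)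
        assume "open_segment p (\<Gamma> u) \<inter> edge_int \<Gamma> f \<noteq> {}"
        then obtain z where "z \<in> open_segment p (\<Gamma> u)" "z \<in> open_segment (\<Gamma> u) (\<Gamma> y')"
          unfolding fy edge_int_pair by auto
        then show False using shared[of y' z] fy by blast
      qed
    next
      case False
      then show ?thesis using P5 u f vf c by blast
    qed
  qed
qed

lemma newnew_ok:
  assumes P3: "\<forall>a\<in>V. \<forall>b\<in>V. a \<noteq> b \<longrightarrow> \<not> collinear {\<Gamma> a, \<Gamma> b, p}"
    and u: "u \<in> N" and u': "u' \<in> N" and uu: "u \<noteq> u'"
  shows "open_segment p (\<Gamma> u) \<inter> open_segment p (\<Gamma> u') = {}"
proof (rule ccontr)
  assume "open_segment p (\<Gamma> u) \<inter> open_segment p (\<Gamma> u') \<noteq> {}"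
  then obtain z where "z \<in> open_segment p (\<Gamma> u)" "z \<in> open_segment p (\<Gamma> u')" by blast
  then have "collinear {p, \<Gamma> u, \<Gamma> u'}" by (rule shared_endpoint)
  then have "collinear {\<Gamma> u, \<Gamma> u', p}" by (simp add: insert_commute)
  then show False using P3 N_props(2)[OF u] N_props(2)[OF u'] uu by metis
qed

end


context CC begin

lemma verify:
  assumes P2: "p \<notin> \<Gamma> ` V"
    and P3: "\<forall>a\<in>V. \<forall>b\<in>V. a \<noteq> b \<longrightarrow> \<not> collinear {\<Gamma> a, \<Gamma> b, p}"
    and P4: "p \<in> admissible E \<Gamma> col v"
    and P5: "\<forall>u\<in>N. \<forall>e\<in>E. v \<notin> e \<longrightarrow> u \<notin> e \<longrightarrow> col e = col {v, u} \<longrightarrow> open_segment p (\<Gamma> u) \<inter> edge_int \<Gamma> e = {}"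
    and P6: "\<forall>u\<in>N. \<forall>e2\<in>E. \<forall>e3\<in>E. e2 \<noteq> e3 \<longrightarrow> open_segment p (\<Gamma> u) \<inter> edge_int \<Gamma> e2 \<inter> edge_int \<Gamma> e3 = {}"
  shows "layer_drawing (insert w V) (clone_edges E v w) l (\<Gamma>(w := p)) (clone_coloring col v w) \<and>
         general_position (insert w V) (clone_edges E v w) (\<Gamma>(w := p))"
proof -
  let ?G = "\<Gamma>(w := p)"
  let ?E = "clone_edges E v w"
  let ?c = "clone_coloring col v w"
  have GV: "?G x = \<Gamma> x" if "x \<in> V" for x using that wV by auto
  have inj: "inj_on ?G (insert w V)"
  proof -
    have "inj_on ?G V" using ld GV unfolding layer_drawing_def by (metis inj_on_cong)
    moreover have "?G w \<notin> ?G ` (V - {w})" using P2 GV by auto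
    ultimately show ?thesis by simp
  qed
  have cols: "\<forall>e\<in>?E. ?c e \<in> {1..l}"
  proof
    fix e assume "e \<in> ?E"
    then consider "e \<in> E" | u where "u \<in> N" "e = {w, u}" unfolding E'_iff by blast
    then show "?c e \<in> {1..l}"
    proof cases
      case 1 then show ?thesis using col'_old[OF w_notin] colE by simp
    next
      case 2 then show ?thesis using col'_new N_props[OF 2(1)] colE by simp
    qed
  qed
  have new_old: "edge_int ?G {w, u} \<inter> edge_int ?G f = {}"
    if "u \<in> N" "f \<in> E" "?c {w, u} = ?c f" for u f
  proof -
    have "col f = col {v, u}" using that col'_new col'_old[OF w_notin] N_props(5) by simp
    then have "open_segment p (\<Gamma> u) \<inter> edge_int \<Gamma> f = {}"
      using newedge_ok[OF P3 P4 P5] that by blast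
    then show ?thesis using eint_new N_props(5)[OF that(1)] eint_old[OF that(2)] by simp
  qed
  have new_new: "edge_int ?G {w, u} \<inter> edge_int ?G {w, u'} = {}"
    if "u \<in> N" "u' \<in> N" "{w, u} \<noteq> {w, u'}" for u u'
  proof -
    have "u \<noteq> u'" using that by blast
    then show ?thesis using newnew_ok[OF P3 that(1,2)] eint_new N_props(5) that by simp
  qed
  have nocr: "\<forall>e\<in>?E. \<forall>f\<in>?E. ?c e = ?c f \<longrightarrow> \<not> crosses ?G e f"
  proof (intro ballI impI)
    fix e f assume e: "e \<in> ?E" and f: "f \<in> ?E" and c: "?c e = ?c f"
    show "\<not> crosses ?G e f"
    proof
      assume cr: "crosses ?G e f"
      then have ef: "e \<noteq> f" "edge_int ?G e \<inter> edge_int ?G f \<noteq> {}" unfolding crosses_def by auto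
      consider "e \<in> E" | u where "u \<in> N" "e = {w, u}" using e unfolding E'_iff by blast
      then show False
      proof cases
        case 1
        consider "f \<in> E" | u' where "u' \<in> N" "f = {w, u'}" using f unfolding E'_iff by blast
        then show False
        proof cases
          case fo: 1
          have "col e = col f" using c col'_old w_notin 1 fo by simp
          then show False using nocross 1 fo ef eint_old by simp
        next
          case 2
          then show False using new_old[of u' e] 1 c ef by (simp add: Int_commute)
        qed
      next
        case 2
        consider "f \<in> E" | u' where "u' \<in> N" "f = {w, u'}" using f unfolding E'_iff by blast
        then show False
        proof cases
          case 1
          then show False using new_old[of u f] 2 c ef by simp
        next
          case fn: 2
          then show False using new_new[of u u'] 2 fn ef by simp
        qed
      qed
    qed
  qed
  have ncol3: "\<forall>a\<in>insert w V. \<forall>b\<in>insert w V. \<forall>c\<in>insert w V. distinct [a, b, c] \<longrightarrow>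
       \<not> collinear {?G a, ?G b, ?G c}"
  proof (intro ballI impI)
    fix a b c assume abc: "a \<in> insert w V" "b \<in> insert w V" "c \<in> insert w V" "distinct [a, b, c]"
    show "\<not> collinear {?G a, ?G b, ?G c}"
    proof (cases "a = w")
      case True
      then have "b \<in> V" "c \<in> V" "b \<noteq> c" using abc by auto
      then have "\<not> collinear {\<Gamma> b, \<Gamma> c, p}" using P3 by blast
      moreover have "{?G a, ?G b, ?G c} = {\<Gamma> b, \<Gamma> c, p}" using True abc GV \<open>b \<in> V\<close> \<open>c \<in> V\<close> by auto
      ultimately show ?thesis by simp
    next
      case aw: False
      show ?thesis
      proof (cases "b = w")
        case True
        then have "a \<in> V" "c \<in> V" "a \<noteq> c" using abc aw by auto
        then have "\<not> collinear {\<Gamma> a, \<Gamma> c, p}" using P3 by blast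
        moreover have "{?G a, ?G b, ?G c} = {\<Gamma> a, \<Gamma> c, p}" using True abc GV \<open>a \<in> V\<close> \<open>c \<in> V\<close> by auto
        ultimately show ?thesis by simp
      next
        case bw: False
        show ?thesis
        proof (cases "c = w")
          case True
          then have "a \<in> V" "b \<in> V" "a \<noteq> b" using abc aw bw by auto
          then have "\<not> collinear {\<Gamma> a, \<Gamma> b, p}" using P3 by blast
          moreover have "{?G a, ?G b, ?G c} = {\<Gamma> a, \<Gamma> b, p}" using True GV \<open>a \<in> V\<close> \<open>b \<in> V\<close> by auto
          ultimately show ?thesis by simp
        next
          case False
          then have "a \<in> V" "b \<in> V" "c \<in> V" using abc aw bw by auto
          then show ?thesis using ncol[of a b c] abc GV by simp
        qed
      qed
    qed
  qed
  have one_new: False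
    if "u \<in> N" "f \<in> E" "g \<in> E" "f \<noteq> g" "x \<in> edge_int ?G {w, u}" "x \<in> edge_int ?G f" "x \<in> edge_int ?G g"
    for u f g x
  proof -
    have "x \<in> open_segment p (\<Gamma> u)" "x \<in> edge_int \<Gamma> f" "x \<in> edge_int \<Gamma> g"
      using that eint_new N_props(5) eint_old by auto
    then show False using P6 that(1-4) by blast
  qed
  have two_new: False
    if A: "e \<in> ?E" "f \<in> ?E" "e \<noteq> f" "e \<notin> E" "f \<notin> E" "x \<in> edge_int ?G e" "x \<in> edge_int ?G f" for e f x
  proof -
    obtain u where u: "u \<in> N" "e = {w, u}" using A(1,4) unfolding E'_iff by blast
    obtain u' where u': "u' \<in> N" "f = {w, u'}" using A(2,5) unfolding E'_iff by blast
    show False using new_new[OF u(1) u'(1)] A u u' by blast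
  qed
  have newE: "\<exists>u\<in>N. e = {w, u}" if "e \<in> ?E" "e \<notin> E" for e using that unfolding E'_iff by blast
  have tri: "\<not> (\<exists>x. \<exists>e1\<in>?E. \<exists>e2\<in>?E. \<exists>e3\<in>?E. e1 \<noteq> e2 \<and> e1 \<noteq> e3 \<and> e2 \<noteq> e3 \<and>
          x \<in> edge_int ?G e1 \<and> x \<in> edge_int ?G e2 \<and> x \<in> edge_int ?G e3)"
  proof
    assume "\<exists>x. \<exists>e1\<in>?E. \<exists>e2\<in>?E. \<exists>e3\<in>?E. e1 \<noteq> e2 \<and> e1 \<noteq> e3 \<and> e2 \<noteq> e3 \<and>
          x \<in> edge_int ?G e1 \<and> x \<in> edge_int ?G e2 \<and> x \<in> edge_int ?G e3"
    then obtain x e1 e2 e3 where h: "e1 \<in> ?E" "e2 \<in> ?E" "e3 \<in> ?E" "e1 \<noteq> e2" "e1 \<noteq> e3" "e2 \<noteq> e3"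
      "x \<in> edge_int ?G e1" "x \<in> edge_int ?G e2" "x \<in> edge_int ?G e3" by blast
    show False
    proof (cases "e1 \<in> E")
      case e1: True
      show False
      proof (cases "e2 \<in> E")
        case e2: True
        show False
        proof (cases "e3 \<in> E")
          case e3: True
          then show False using no3[OF e1 e2 e3 h(4-6), of x] h(7-9) eint_old e1 e2 by simp
        next
          case e3: False
          then obtain u where "u \<in> N" "e3 = {w, u}" using newE h(3) by blast
          then show False using one_new[of u e1 e2 x] e1 e2 h by blast
        qed
      next
        case e2: False
        show False
        proof (cases "e3 \<in> E")
          case e3: True
          obtain u where "u \<in> N" "e2 = {w, u}" using newE h(2) e2 by blast
          then show False using one_new[of u e1 e3 x] e1 e3 h by blast
        next
          case e3: False
          then show False using two_new[of e2 e3 x] e2 h by blast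
        qed
      qed
    next
      case e1: False
      show False
      proof (cases "e2 \<in> E")
        case e2: True
        show False
        proof (cases "e3 \<in> E")
          case e3: True
          obtain u where "u \<in> N" "e1 = {w, u}" using newE h(1) e1 by blast
          then show False using one_new[of u e2 e3 x] e2 e3 h by blast
        next
          case e3: False
          then show False using two_new[of e1 e3 x] e1 h by blast
        qed
      next
        case e2: False
        then show False using two_new[of e1 e2 x] e1 h by blast
      qed
    qed
  qed
  show ?thesis
    unfolding layer_drawing_def general_position_def
    using inj cols nocr ncol3 tri by blast
qed

end


context CC begin

lemma disjoint_segs:
  assumes u: "u \<in> N" and e: "e \<in> E" and ve: "v \<notin> e" and ue: "u \<notin> e" and c: "col e = col {v, u}"
    and xy: "e = {x, y}" "x \<noteq> y" "x \<in> V" "y \<in> V"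
  shows "closed_segment (\<Gamma> v) (\<Gamma> u) \<inter> closed_segment (\<Gamma> x) (\<Gamma> y) = {}"
proof (rule ccontr)
  note Nu = N_props[OF u]
  assume "closed_segment (\<Gamma> v) (\<Gamma> u) \<inter> closed_segment (\<Gamma> x) (\<Gamma> y) \<noteq> {}"
  then obtain z where z1: "z \<in> closed_segment (\<Gamma> v) (\<Gamma> u)" and z2: "z \<in> closed_segment (\<Gamma> x) (\<Gamma> y)" by blast
  have xv: "x \<noteq> v" "y \<noteq> v" "x \<noteq> u" "y \<noteq> u" using ve ue xy by auto
  consider "z = \<Gamma> v" | "z = \<Gamma> u" | "z \<in> open_segment (\<Gamma> v) (\<Gamma> u)"
    using z1 unfolding closed_segment_eq_open by blast
  then show False
  proof cases
    case 1
    then show False using closed_vertex[of x y v] z2 xy vV xv by auto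
  next
    case 2
    then show False using closed_vertex[of x y u] z2 xy Nu xv by auto
  next
    case 3
    consider "z = \<Gamma> x" | "z = \<Gamma> y" | "z \<in> open_segment (\<Gamma> x) (\<Gamma> y)"
      using z2 unfolding closed_segment_eq_open by blast
    then show False
    proof cases
      case 1
      then show False using vertex_not_open[of v u x] 3 vV Nu xy xv by auto
    next
      case 2
      then show False using vertex_not_open[of v u y] 3 vV Nu xy xv by auto
    next
      case o: 3
      have "{v, u} \<noteq> e" using ve by blast
      then have "edge_int \<Gamma> {v, u} \<inter> edge_int \<Gamma> e = {}" using nocross[of "{v, u}" e] Nu(4) e c by simp
      then show False using 3 o xy(1) by (simp add: edge_int_pair) blast
    qed
  qed
qed

definition "PR = {(a, b). a \<in> N \<and> b \<in> N \<and> a \<noteq> b \<and> col {v, a} = col {v, b}}"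
definition "SP = {(a, b). a \<in> S \<and> b \<in> S \<and> a \<noteq> b}"
definition "Q = {(u, e). u \<in> N \<and> e \<in> E \<and> v \<notin> e \<and> u \<notin> e \<and> col e = col {v, u}}"
definition "gfun a b p = cross2 (p - \<Gamma> v) (\<Gamma> b - \<Gamma> v) * cross2 (\<Gamma> a - \<Gamma> v) (p - \<Gamma> v)"
definition "hfun a b p = cross2 (\<Gamma> b - \<Gamma> a) (p - \<Gamma> a) * cross2 (\<Gamma> b - \<Gamma> a) (\<Gamma> v - \<Gamma> a)"

lemma finPR: "finite PR"
proof (rule finite_subset[of _ "N \<times> N"])
  show "PR \<subseteq> N \<times> N" unfolding PR_def by auto
  show "finite (N \<times> N)" using finN by simp
qed

lemma finSP: "finite SP"
proof (rule finite_subset[of _ "S \<times> S"])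
  show "SP \<subseteq> S \<times> S" unfolding SP_def by auto
  have "S \<subseteq> V" using vc by (simp add: vertex_cover_def)
  then have "finite S" using finV by (simp add: finite_subset)
  then show "finite (S \<times> S)" by simp
qed

lemma finQ: "finite Q"
proof (rule finite_subset[of _ "N \<times> E"])
  show "Q \<subseteq> N \<times> E" unfolding Q_def by auto
  show "finite (N \<times> E)" using finN finE by simp
qed

lemma adm_iff: "p \<in> admissible E \<Gamma> col v \<longleftrightarrow> (\<forall>(a, b)\<in>PR. gfun a b p > 0)"
proof -
  have "p \<in> admissible E \<Gamma> col v \<longleftrightarrow> (\<forall>(a, b)\<in>PR. p \<in> tie \<Gamma> v a b)"
    unfolding admissible_def PR_def by blast
  also have "\<dots> \<longleftrightarrow> (\<forall>(a, b)\<in>PR. gfun a b p > 0)"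
  proof -
    have "p \<in> tie \<Gamma> v a b \<longleftrightarrow> gfun a b p > 0" if "(a, b) \<in> PR" for a b
    proof -
      have "a \<in> N" "b \<in> N" "a \<noteq> b" using that unfolding PR_def by auto
      then have D: "cross2 (\<Gamma> a - \<Gamma> v) (\<Gamma> b - \<Gamma> v) \<noteq> 0"
        using D_nz[of a b] N_props(2,3) by metis
      show ?thesis unfolding gfun_def by (rule tie_iff[where \<Gamma>=\<Gamma> and v=v and a=a and b=b, OF D])
    qed
    then show ?thesis by blast
  qed
  finally show ?thesis .
qed

lemma cell_if: "(\<forall>(a, b)\<in>SP. hfun a b p > 0) \<Longrightarrow> p \<in> cell \<Gamma> S v"
  unfolding cell_def SP_def hfun_def halfplane_def by fastforce

lemma hfun_v: "(a, b) \<in> SP \<Longrightarrow> hfun a b (\<Gamma> v) > 0"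
proof -
  assume "(a, b) \<in> SP"
  then have ab: "a \<in> S" "b \<in> S" "a \<noteq> b" unfolding SP_def by auto
  have SV: "S \<subseteq> V" using vc by (simp add: vertex_cover_def)
  have "\<not> collinear {\<Gamma> a, \<Gamma> b, \<Gamma> v}" using ncol[of a b v] ab SV vV vS by auto
  then have "cross2 (\<Gamma> b - \<Gamma> a) (\<Gamma> v - \<Gamma> a) \<noteq> 0" unfolding collinear_cross2 .
  then show ?thesis unfolding hfun_def by (metis linorder_neqE_linordered_idom mult_neg_neg mult_pos_pos)
qed

lemma good1: "eventually (\<lambda>p. (\<forall>(a, b)\<in>SP. hfun a b p > 0) \<and>
    (\<forall>(u, e)\<in>Q. open_segment p (\<Gamma> u) \<inter> edge_int \<Gamma> e = {})) (nhds (\<Gamma> v))"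
proof (rule eventually_conj)
  show "eventually (\<lambda>p. \<forall>(a, b)\<in>SP. hfun a b p > 0) (nhds (\<Gamma> v))"
    unfolding case_prod_beta
  proof (rule eventually_ball_finite[OF finSP], rule ballI)
    fix ab assume "ab \<in> SP"
    have "((\<lambda>p. hfun (fst ab) (snd ab) p) \<longlongrightarrow> hfun (fst ab) (snd ab) (\<Gamma> v)) (nhds (\<Gamma> v))"
      unfolding hfun_def by (intro tendsto_intros filterlim_ident)
    moreover have "hfun (fst ab) (snd ab) (\<Gamma> v) > 0" using hfun_v \<open>ab \<in> SP\<close> by simp
    ultimately show "eventually (\<lambda>p. hfun (fst ab) (snd ab) p > 0) (nhds (\<Gamma> v))"
      by (rule order_tendstoD(1))
  qed
  show "eventually (\<lambda>p. \<forall>(u, e)\<in>Q. open_segment p (\<Gamma> u) \<inter> edge_int \<Gamma> e = {}) (nhds (\<Gamma> v))"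
    unfolding case_prod_beta
  proof (rule eventually_ball_finite[OF finQ], rule ballI)
    fix ue assume ue: "ue \<in> Q"
    obtain u e where uee: "ue = (u, e)" by fastforce
    have h: "u \<in> N" "e \<in> E" "v \<notin> e" "u \<notin> e" "col e = col {v, u}" using ue uee unfolding Q_def by auto
    obtain x y where xy: "e = {x, y}" "x \<noteq> y" "x \<in> V" "y \<in> V" using edgeE[OF h(2)] by blast
    have "closed_segment (\<Gamma> v) (\<Gamma> u) \<inter> closed_segment (\<Gamma> x) (\<Gamma> y) = {}"
      by (rule disjoint_segs[OF h xy])
    then have ev: "eventually (\<lambda>p. closed_segment p (\<Gamma> u) \<inter> closed_segment (\<Gamma> x) (\<Gamma> y) = {}) (nhds (\<Gamma> v))"
      by (rule seg_near)
    have "open_segment p (\<Gamma> u) \<inter> edge_int \<Gamma> e = {}"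
      if "closed_segment p (\<Gamma> u) \<inter> closed_segment (\<Gamma> x) (\<Gamma> y) = {}" for p
      using that open_closed_segment unfolding xy(1) edge_int_pair by blast
    then show "eventually (\<lambda>p. open_segment p (\<Gamma> (fst ue)) \<inter> edge_int \<Gamma> (snd ue) = {}) (nhds (\<Gamma> v))"
      using eventually_mono[OF ev] uee by simp
  qed
qed

end


context CC begin

lemma B6_negligible:
  assumes u: "u \<in> N" and e2: "e2 \<in> E" and e3: "e3 \<in> E" and ne: "e2 \<noteq> e3"
  shows "negligible {p. open_segment p (\<Gamma> u) \<inter> edge_int \<Gamma> e2 \<inter> edge_int \<Gamma> e3 \<noteq> {}}"
proof -
  obtain z0 where z0: "edge_int \<Gamma> e2 \<inter> edge_int \<Gamma> e3 \<subseteq> {z0}" using inter_one[OF e2 e3 ne] by blast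
  let ?B = "{p. open_segment p (\<Gamma> u) \<inter> edge_int \<Gamma> e2 \<inter> edge_int \<Gamma> e3 \<noteq> {}}"
  show ?thesis
  proof (cases "z0 = \<Gamma> u")
    case True
    have "?B = {}"
    proof (rule ccontr)
      assume "?B \<noteq> {}"
      then obtain p z where "z \<in> open_segment p (\<Gamma> u)" "z \<in> edge_int \<Gamma> e2 \<inter> edge_int \<Gamma> e3" by blast
      then have "z = \<Gamma> u" "z \<noteq> \<Gamma> u" using z0 True by (auto simp: open_segment_def)
      then show False by simp
    qed
    then show ?thesis by simp
  next
    case False
    have "?B \<subseteq> {p. collinear {\<Gamma> u, z0, p}}"
    proof
      fix p assume "p \<in> ?B"
      then obtain z where "z \<in> open_segment p (\<Gamma> u)" "z \<in> edge_int \<Gamma> e2 \<inter> edge_int \<Gamma> e3" by blast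
      then have "z = z0" "collinear {p, \<Gamma> u, z}" using z0 open_seg_collinear by auto
      then show "p \<in> {p. collinear {\<Gamma> u, z0, p}}" by (simp add: insert_commute)
    qed
    moreover have "negligible {p. collinear {\<Gamma> u, z0, p}}" using line_negligible False by metis
    ultimately show ?thesis using negligible_subset by blast
  qed
qed

lemma construct:
  assumes "admissible E \<Gamma> col v \<noteq> {}"
  shows "\<exists>p. p \<in> cell \<Gamma> S v \<and> p \<notin> \<Gamma> ` V \<and>
    (\<forall>a\<in>V. \<forall>b\<in>V. a \<noteq> b \<longrightarrow> \<not> collinear {\<Gamma> a, \<Gamma> b, p}) \<and>
    p \<in> admissible E \<Gamma> col v \<and>
    (\<forall>u\<in>N. \<forall>e\<in>E. v \<notin> e \<longrightarrow> u \<notin> e \<longrightarrow> col e = col {v, u} \<longrightarrow> open_segment p (\<Gamma> u) \<inter> edge_int \<Gamma> e = {}) \<and>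
    (\<forall>u\<in>N. \<forall>e2\<in>E. \<forall>e3\<in>E. e2 \<noteq> e3 \<longrightarrow> open_segment p (\<Gamma> u) \<inter> edge_int \<Gamma> e2 \<inter> edge_int \<Gamma> e3 = {})"
proof -
  define v0 where "v0 = \<Gamma> v"
  obtain \<delta> where \<delta>: "\<delta> > 0" and g1: "\<And>p. dist p v0 < \<delta> \<Longrightarrow> (\<forall>(a, b)\<in>SP. hfun a b p > 0) \<and>
    (\<forall>(u, e)\<in>Q. open_segment p (\<Gamma> u) \<inter> edge_int \<Gamma> e = {})"
    using good1 unfolding eventually_nhds_metric v0_def by blast
  obtain q where q: "q \<in> admissible E \<Gamma> col v" using assms by blast
  define n where "n = norm (q - v0)"
  have n0: "n \<ge> 0" unfolding n_def by simp
  define s where "s = \<delta> / (2 * (n + 1))"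
  have s0: "s > 0" unfolding s_def using \<delta> n0 by simp
  define q' where "q' = v0 + s *\<^sub>R (q - v0)"
  have dq': "dist q' v0 < \<delta>"
  proof -
    have "dist q' v0 = s * n" unfolding q'_def n_def dist_norm using s0 by simp
    also have "\<dots> = \<delta> * n / (2 * (n + 1))" unfolding s_def by simp
    also have "\<dots> < \<delta>"
    proof -
      have "\<delta> * n < \<delta> * (2 * (n + 1))" using \<delta> n0 by (simp add: mult_strict_left_mono)
      then show ?thesis using n0 by (simp add: divide_less_eq)
    qed
    finally show ?thesis .
  qed
  have gq': "gfun a b q' > 0" if "(a, b) \<in> PR" for a b
  proof -
    have "gfun a b q > 0" using q that adm_iff by blast
    moreover have "gfun a b q' = (s * s) * gfun a b q"
    proof -
      have eq: "q' - \<Gamma> v = s *\<^sub>R (q - \<Gamma> v)" by (simp add: q'_def v0_def)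
      show ?thesis unfolding gfun_def eq cross2_scaleR_left cross2_scaleR_right by (simp only: mult_ac)
    qed
    ultimately show ?thesis using s0 by simp
  qed
  have ev2: "eventually (\<lambda>p. dist p v0 < \<delta> \<and> (\<forall>(a, b)\<in>PR. gfun a b p > 0)) (nhds q')"
  proof (rule eventually_conj)
    have "((\<lambda>p. dist p v0) \<longlongrightarrow> dist q' v0) (nhds q')" by (intro tendsto_intros filterlim_ident)
    then show "eventually (\<lambda>p. dist p v0 < \<delta>) (nhds q')" using dq' by (rule order_tendstoD(2))
    show "eventually (\<lambda>p. \<forall>(a, b)\<in>PR. gfun a b p > 0) (nhds q')"
      unfolding case_prod_beta
    proof (rule eventually_ball_finite[OF finPR], rule ballI)
      fix ab assume ab: "ab \<in> PR"
      have "((\<lambda>p. gfun (fst ab) (snd ab) p) \<longlongrightarrow> gfun (fst ab) (snd ab) q') (nhds q')"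
        unfolding gfun_def by (intro tendsto_intros filterlim_ident)
      moreover have "gfun (fst ab) (snd ab) q' > 0" using gq'[of "fst ab" "snd ab"] ab by simp
      ultimately show "eventually (\<lambda>p. gfun (fst ab) (snd ab) p > 0) (nhds q')"
        by (rule order_tendstoD(1))
    qed
  qed
  obtain \<epsilon> where \<epsilon>: "\<epsilon> > 0" and g2: "\<And>p. dist p q' < \<epsilon> \<Longrightarrow> dist p v0 < \<delta> \<and> (\<forall>(a, b)\<in>PR. gfun a b p > 0)"
    using ev2 unfolding eventually_nhds_metric by blast
  define L where "L = (\<lambda>(a, b). {p. collinear {\<Gamma> a, \<Gamma> b, p}}) ` {(a, b). a \<in> V \<and> b \<in> V \<and> a \<noteq> b}"
  define M where "M = (\<lambda>(u, e2, e3). {p. open_segment p (\<Gamma> u) \<inter> edge_int \<Gamma> e2 \<inter> edge_int \<Gamma> e3 \<noteq> {}}) `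
     {(u, e2, e3). u \<in> N \<and> e2 \<in> E \<and> e3 \<in> E \<and> e2 \<noteq> e3}"
  define Bad where "Bad = \<Gamma> ` V \<union> \<Union>L \<union> \<Union>M"
  have negL: "negligible (\<Union>L)"
  proof (rule negligible_Union)
    have "{(a, b). a \<in> V \<and> b \<in> V \<and> a \<noteq> b} \<subseteq> V \<times> V" by auto
    then have "finite {(a, b). a \<in> V \<and> b \<in> V \<and> a \<noteq> b}" using finV finite_subset by blast
    then show "finite L" unfolding L_def by simp
    fix T assume "T \<in> L"
    then obtain a b where "a \<in> V" "b \<in> V" "a \<noteq> b" "T = {p. collinear {\<Gamma> a, \<Gamma> b, p}}" unfolding L_def by auto
    then show "negligible T" using line_negligible injG by metis
  qed
  have negM: "negligible (\<Union>M)"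
  proof (rule negligible_Union)
    have "{(u, e2, e3). u \<in> N \<and> e2 \<in> E \<and> e3 \<in> E \<and> e2 \<noteq> e3} \<subseteq> N \<times> E \<times> E" by auto
    moreover have "finite (N \<times> E \<times> E)" using finN finE by simp
    ultimately have "finite {(u, e2, e3). u \<in> N \<and> e2 \<in> E \<and> e3 \<in> E \<and> e2 \<noteq> e3}" using finite_subset by blast
    then show "finite M" unfolding M_def by simp
    fix T assume "T \<in> M"
    then obtain u e2 e3 where "u \<in> N" "e2 \<in> E" "e3 \<in> E" "e2 \<noteq> e3"
      "T = {p. open_segment p (\<Gamma> u) \<inter> edge_int \<Gamma> e2 \<inter> edge_int \<Gamma> e3 \<noteq> {}}" unfolding M_def by auto
    then show "negligible T" using B6_negligible by simp
  qed
  have negB: "negligible Bad" unfolding Bad_def using negL negM finV by auto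
  have "\<not> negligible (ball q' \<epsilon>)" using open_not_negligible[of "ball q' \<epsilon>"] \<epsilon> by simp
  then have "\<not> ball q' \<epsilon> \<subseteq> Bad" using negB negligible_subset by blast
  then obtain p where pb: "p \<in> ball q' \<epsilon>" and pB: "p \<notin> Bad" by blast
  have "dist p q' < \<epsilon>" using pb by (simp add: dist_commute)
  then have h2: "dist p v0 < \<delta>" "\<forall>(a, b)\<in>PR. gfun a b p > 0" using g2 by auto
  then have h1: "\<forall>(a, b)\<in>SP. hfun a b p > 0" "\<forall>(u, e)\<in>Q. open_segment p (\<Gamma> u) \<inter> edge_int \<Gamma> e = {}"
    using g1 by auto
  show ?thesis
  proof (intro exI[of _ p] conjI)
    show "p \<in> cell \<Gamma> S v" using cell_if h1(1) .
    show "p \<notin> \<Gamma> ` V" using pB unfolding Bad_def by blast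
    show "\<forall>a\<in>V. \<forall>b\<in>V. a \<noteq> b \<longrightarrow> \<not> collinear {\<Gamma> a, \<Gamma> b, p}"
      using pB unfolding Bad_def L_def by blast
    show "p \<in> admissible E \<Gamma> col v" using adm_iff h2(2) by blast
    show "\<forall>u\<in>N. \<forall>e\<in>E. v \<notin> e \<longrightarrow> u \<notin> e \<longrightarrow> col e = col {v, u} \<longrightarrow> open_segment p (\<Gamma> u) \<inter> edge_int \<Gamma> e = {}"
      using h1(2) unfolding Q_def by blast
    show "\<forall>u\<in>N. \<forall>e2\<in>E. \<forall>e3\<in>E. e2 \<noteq> e3 \<longrightarrow> open_segment p (\<Gamma> u) \<inter> edge_int \<Gamma> e2 \<inter> edge_int \<Gamma> e3 = {}"
      using pB unfolding Bad_def M_def by blast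
  qed
qed

end

theorem lemma1:
  fixes V :: "'a set" and E :: "'a set set" and l :: nat
    and \<Gamma> :: "'a \<Rightarrow> real^2" and col :: "'a set \<Rightarrow> nat" and S :: "'a set" and v w :: 'a
  assumes "simple_graph V E"
    and "layer_drawing V E l \<Gamma> col"
    and "general_position V E \<Gamma>"
    and "vertex_cover V E S"
    and "v \<in> V" and "v \<notin> S"
    and "w \<notin> V"
  shows "(\<exists>p \<in> cell \<Gamma> S v.
            layer_drawing (insert w V) (clone_edges E v w) l (\<Gamma>(w := p)) (clone_coloring col v w) \<and>
            general_position (insert w V) (clone_edges E v w) (\<Gamma>(w := p)))
         \<longleftrightarrow> admissible E \<Gamma> col v \<noteq> {}"
proof -
  interpret CC V E l \<Gamma> col S v w
    using assms by (unfold_locales) auto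
  show ?thesis
  proof
    assume "\<exists>p \<in> cell \<Gamma> S v.
            layer_drawing (insert w V) (clone_edges E v w) l (\<Gamma>(w := p)) (clone_coloring col v w) \<and>
            general_position (insert w V) (clone_edges E v w) (\<Gamma>(w := p))"
    then obtain p where "p \<in> cell \<Gamma> S v"
      "layer_drawing (insert w V) (clone_edges E v w) l (\<Gamma>(w := p)) (clone_coloring col v w)"
      "general_position (insert w V) (clone_edges E v w) (\<Gamma>(w := p))" by (elim bexE conjE) (rule that)
    then have "p \<in> admissible E \<Gamma> col v" by (rule dir1)
    then show "admissible E \<Gamma> col v \<noteq> {}" by blast
  next
    assume "admissible E \<Gamma> col v \<noteq> {}"
    then obtain p where p: "p \<in> cell \<Gamma> S v" "p \<notin> \<Gamma> ` V"
      "\<forall>a\<in>V. \<forall>b\<in>V. a \<noteq> b \<longrightarrow> \<not> collinear {\<Gamma> a, \<Gamma> b, p}"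
      "p \<in> admissible E \<Gamma> col v"
      "\<forall>u\<in>nbhd E v. \<forall>e\<in>E. v \<notin> e \<longrightarrow> u \<notin> e \<longrightarrow> col e = col {v, u} \<longrightarrow> open_segment p (\<Gamma> u) \<inter> edge_int \<Gamma> e = {}"
      "\<forall>u\<in>nbhd E v. \<forall>e2\<in>E. \<forall>e3\<in>E. e2 \<noteq> e3 \<longrightarrow> open_segment p (\<Gamma> u) \<inter> edge_int \<Gamma> e2 \<inter> edge_int \<Gamma> e3 = {}"
      using construct[OF \<open>admissible E \<Gamma> col v \<noteq> {}\<close>] by (elim exE conjE) (rule that)
    have "layer_drawing (insert w V) (clone_edges E v w) l (\<Gamma>(w := p)) (clone_coloring col v w) \<and>
          general_position (insert w V) (clone_edges E v w) (\<Gamma>(w := p))"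
      by (rule verify[OF p(2-6)])
    then show "\<exists>p \<in> cell \<Gamma> S v.
            layer_drawing (insert w V) (clone_edges E v w) l (\<Gamma>(w := p)) (clone_coloring col v w) \<and>
            general_position (insert w V) (clone_edges E v w) (\<Gamma>(w := p))"
      using p(1) by (rule bexI)
  qed
qed

end
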